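(* Let $r\ge 2$ and let $GT(r)$ be the glued binary tree of depth $r$, built from the two copies $T_r^{(1)}$ and $T_r^{(2)}$ of the perfect binary tree of depth $r$. For each $i\in\{1,2\}$, the subgraph of $GT(r)$ induced by $V(T_r^{(i)})$ is an isometric subgraph of $GT(r)$. Moreover, if $u,v\in V(T_r^{(i)})$, then in $GT(r)$ there are exactly two shortest $u,v$-paths if $u$ and $v$ are both quasi-leaves, and otherwise the shortest $u,v$-path is unique.
   Context: A perfect binary tree of depth $r\ge1$ is a rooted tree in which every non-leaf vertex has exactly $2$ children and all leaves have depth $r$. The glued binary tree $GT(r)$ is obtained from two copies $T_r^{(1)}$ and $T_r^{(2)}$ of the perfect binary tree of depth $r$ by pairwise identifying their leaves, where each leaf of $T_r^{(1)}$ is identified with its image in $T_r^{(2)}$ under a fixed isomorphism of the two copies. The identified vertices are the quasi-leaves of $GT(r)$; thus the set of quasi-leaves is $V(T_r^{(1)})\cap V(T_r^{(2)})$. A subgraph $H$ of $G$ is isometric if $d_H(u,v)=d_G(u,v)$ for all $u,v\in V(H)$. *)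

theory Defs
  imports Main "HOL-Library.Extended_Nat"
begin

definition adj :: "('v \<times> 'v) set \<Rightarrow> 'v \<Rightarrow> 'v \<Rightarrow> bool" where
  "adj E x y \<longleftrightarrow> (x, y) \<in> E \<or> (y, x) \<in> E"

definition walk :: "'v set \<Rightarrow> ('v \<times> 'v) set \<Rightarrow> 'v list \<Rightarrow> bool" where
  "walk V E xs \<longleftrightarrow> xs \<noteq> [] \<and> set xs \<subseteq> V \<and>
     (\<forall>i. Suc i < length xs \<longrightarrow> adj E (xs ! i) (xs ! Suc i))"

definition gpath :: "'v set \<Rightarrow> ('v \<times> 'v) set \<Rightarrow> 'v list \<Rightarrow> bool" where
  "gpath V E xs \<longleftrightarrow> walk V E xs \<and> distinct xs"

text \<open>Distance (infinite if no walk exists); the length of a walk is its number of edges.\<close>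
definition gdist :: "'v set \<Rightarrow> ('v \<times> 'v) set \<Rightarrow> 'v \<Rightarrow> 'v \<Rightarrow> enat" where
  "gdist V E u v = (INF xs \<in> {xs. walk V E xs \<and> hd xs = u \<and> last xs = v}. enat (length xs - 1))"

definition induced_edges :: "('v \<times> 'v) set \<Rightarrow> 'v set \<Rightarrow> ('v \<times> 'v) set" where
  "induced_edges E S = E \<inter> (S \<times> S)"

definition isometric_subgraph ::
  "'v set \<Rightarrow> ('v \<times> 'v) set \<Rightarrow> 'v set \<Rightarrow> ('v \<times> 'v) set \<Rightarrow> bool" where
  "isometric_subgraph VH EH VG EG \<longleftrightarrow> VH \<subseteq> VG \<and> EH \<subseteq> EG \<and>
     (\<forall>u\<in>VH. \<forall>v\<in>VH. gdist VH EH u v = gdist VG EG u v)"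

definition shortest_paths :: "'v set \<Rightarrow> ('v \<times> 'v) set \<Rightarrow> 'v \<Rightarrow> 'v \<Rightarrow> 'v list set" where
  "shortest_paths V E u v =
     {xs. gpath V E xs \<and> hd xs = u \<and> last xs = v \<and> enat (length xs - 1) = gdist V E u v}"

text \<open>Copy i (i = 1, 2) of the perfect binary tree of depth r has vertices (i, w) with w a
  binary word of length at most r (w = path from the root); the children of (i, w) are
  (i, w@[b]). Gluing identifies the leaves (1, w) and (2, w) (length w = r), the fixed
  isomorphism being the identity on words; the glued leaf is represented as (0, w).\<close>

definition glue :: "nat \<Rightarrow> nat \<times> bool list \<Rightarrow> nat \<times> bool list" where
  "glue r x = (if length (snd x) = r then (0, snd x) else x)"

definition tree_verts :: "nat \<Rightarrow> nat \<Rightarrow> (nat \<times> bool list) set" where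
  "tree_verts r i = {(i, w) | w. length w \<le> r}"

definition tree_edges :: "nat \<Rightarrow> nat \<Rightarrow> ((nat \<times> bool list) \<times> (nat \<times> bool list)) set" where
  "tree_edges r i = {((i, w), (i, w @ [b])) | w b. length w < r}"

definition GT_copy :: "nat \<Rightarrow> nat \<Rightarrow> (nat \<times> bool list) set" where
  "GT_copy r i = glue r ` tree_verts r i"

definition GT_verts :: "nat \<Rightarrow> (nat \<times> bool list) set" where
  "GT_verts r = GT_copy r 1 \<union> GT_copy r 2"

definition GT_edges :: "nat \<Rightarrow> ((nat \<times> bool list) \<times> (nat \<times> bool list)) set" where
  "GT_edges r = (\<lambda>(x, y). (glue r x, glue r y)) ` (tree_edges r 1 \<union> tree_edges r 2)"

definition quasi_leaves :: "nat \<Rightarrow> (nat \<times> bool list) set" where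
  "quasi_leaves r = GT_copy r 1 \<inter> GT_copy r 2"

end

theory Submission imports Defs begin

definition Dl :: "nat \<Rightarrow> nat \<Rightarrow> nat \<times> bool list \<Rightarrow> int" where
 "Dl r c x = (if fst x = c then int (length (snd x)) else if fst x = 0 then int r
     else 2 * int r - int (length (snd x)))"

fun lcp :: "bool list \<Rightarrow> bool list \<Rightarrow> bool list" where
 "lcp (x#xs) (y#ys) = (if x = y then x # lcp xs ys else [])" | "lcp _ _ = []"

lemma lcp_take1: "take (length (lcp a b)) a = lcp a b"
  by (induction a b rule: lcp.induct) auto
lemma lcp_take2: "take (length (lcp a b)) b = lcp a b"
  by (induction a b rule: lcp.induct) auto
lemma lcp_len1: "length (lcp a b) \<le> length a"
  by (induction a b rule: lcp.induct) auto
lemma lcp_len2: "length (lcp a b) \<le> length b"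
  by (induction a b rule: lcp.induct) auto
lemma lcp_neq: "length (lcp a b) < length a \<Longrightarrow> length (lcp a b) < length b \<Longrightarrow>
   a ! length (lcp a b) \<noteq> b ! length (lcp a b)"
  by (induction a b rule: lcp.induct) auto
lemma lcp_self: "lcp a a = a"
  by (induction a) auto

lemma glue_lt: "length w < r \<Longrightarrow> glue r (c,w) = (c,w)"
  by (simp add: glue_def)
lemma glue_eq: "length w = r \<Longrightarrow> glue r (c,w) = (0,w)"
  by (simp add: glue_def)
lemma snd_glue[simp]: "snd (glue r x) = snd x"
  by (simp add: glue_def)

lemma copy_iff: "c \<noteq> 0 \<Longrightarrow> x \<in> GT_copy r c \<longleftrightarrow>
   ((fst x = c \<and> length (snd x) < r) \<or> (fst x = 0 \<and> length (snd x) = r))"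
proof
  assume "x \<in> GT_copy r c"
  then obtain w where "length w \<le> r" "x = glue r (c,w)"
    unfolding GT_copy_def tree_verts_def by auto
  then show "((fst x = c \<and> length (snd x) < r) \<or> (fst x = 0 \<and> length (snd x) = r))"
    by (auto simp: glue_def)
next
  assume h: "((fst x = c \<and> length (snd x) < r) \<or> (fst x = 0 \<and> length (snd x) = r))"
  have "x = glue r (c, snd x)" using h by (cases x) (auto simp: glue_def)
  moreover have "(c, snd x) \<in> tree_verts r c" using h by (auto simp: tree_verts_def)
  ultimately show "x \<in> GT_copy r c" unfolding GT_copy_def by blast
qed

lemma copy_glue: "c \<noteq> 0 \<Longrightarrow> x \<in> GT_copy r c \<Longrightarrow> x = glue r (c, snd x)"
  by (cases x) (auto simp: copy_iff glue_def)

lemma glue_in_copy: "length w \<le> r \<Longrightarrow> glue r (c,w) \<in> GT_copy r c"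
  unfolding GT_copy_def tree_verts_def by auto

lemma verts_iff: "x \<in> GT_verts r \<longleftrightarrow>
   (((fst x = 1 \<or> fst x = 2) \<and> length (snd x) < r) \<or> (fst x = 0 \<and> length (snd x) = r))"
  unfolding GT_verts_def using copy_iff[of 1 x r] copy_iff[of 2 x r] by auto

lemma adj_iff: "adj (GT_edges r) x y \<longleftrightarrow> (\<exists>c w bb. c \<in> {1,2} \<and> length w < r \<and>
   ((x = glue r (c,w) \<and> y = glue r (c, w@[bb])) \<or> (y = glue r (c,w) \<and> x = glue r (c, w@[bb]))))"
  unfolding adj_def GT_edges_def tree_edges_def by fastforce

lemma adj_D: assumes "adj (GT_edges r) x y" "c \<in> {1,2}"
  shows "\<bar>Dl r c x - Dl r c y\<bar> = 1"
proof -
  obtain c' w bb where h: "c' \<in> {1,2}" "length w < r"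
    "(x = glue r (c',w) \<and> y = glue r (c', w@[bb])) \<or> (y = glue r (c',w) \<and> x = glue r (c', w@[bb]))"
    using assms(1) adj_iff by metis
  show ?thesis using h assms(2) by (cases "Suc (length w) < r"; auto simp: Dl_def glue_def)
qed

lemma adj_word: assumes "adj (GT_edges r) x y"
  shows "(\<exists>bb. snd y = snd x @ [bb]) \<or> (\<exists>bb. snd x = snd y @ [bb])"
  using assms unfolding adj_iff by auto

lemma adj_down: assumes "c \<in> {1,2}" "x \<in> GT_copy r c" "adj (GT_edges r) x y"
  "Dl r c y = Dl r c x - 1"
  shows "y = glue r (c, butlast (snd x))"
proof -
  obtain c' w bb where h: "c' \<in> {1,2}" "length w < r"
    "(x = glue r (c',w) \<and> y = glue r (c', w@[bb])) \<or> (y = glue r (c',w) \<and> x = glue r (c', w@[bb]))"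
    using assms(3) adj_iff by metis
  have cx: "(fst x = c \<and> length (snd x) < r) \<or> (fst x = 0 \<and> length (snd x) = r)"
    using assms(2) copy_iff[of c x r] assms(1) by auto
  show ?thesis using h assms(1,4) cx by (auto simp: Dl_def glue_def split: if_splits)
qed

lemma Dl_ge: "c \<in> {1,2} \<Longrightarrow> x \<in> GT_verts r \<Longrightarrow> int (length (snd x)) \<le> Dl r c x"
  by (auto simp: verts_iff Dl_def)
lemma Dl_eq_copy: "c \<in> {1,2} \<Longrightarrow> x \<in> GT_verts r \<Longrightarrow> Dl r c x = int (length (snd x)) \<Longrightarrow> x \<in> GT_copy r c"
  by (auto simp: verts_iff Dl_def copy_iff split: if_splits)
lemma Dl_copy: "c \<in> {1,2} \<Longrightarrow> x \<in> GT_copy r c \<Longrightarrow> Dl r c x = int (length (snd x))"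
  by (auto simp: Dl_def copy_iff)
lemma copy_verts: "c \<in> {1,2} \<Longrightarrow> GT_copy r c \<subseteq> GT_verts r"
  by (auto simp: GT_verts_def)
lemma copy_len: "c \<in> {1,2} \<Longrightarrow> x \<in> GT_copy r c \<Longrightarrow> length (snd x) \<le> r"
  by (auto simp: copy_iff)


lemma walk_adj: "walk V E xs \<Longrightarrow> Suc t < length xs \<Longrightarrow> adj E (xs!t) (xs!Suc t)"
  by (simp add: walk_def)
lemma walk_in: "walk V E xs \<Longrightarrow> t < length xs \<Longrightarrow> xs!t \<in> V"
  by (auto simp: walk_def)
lemma adj_sym: "adj E x y \<Longrightarrow> adj E y x"
  by (auto simp: adj_def)

lemma walk_rev: assumes "walk V E xs" shows "walk V E (rev xs)"
  unfolding walk_def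
proof (intro conjI allI impI)
  show "rev xs \<noteq> []" "set (rev xs) \<subseteq> V" using assms by (auto simp: walk_def)
  fix i assume i: "Suc i < length (rev xs)"
  define j where "j = length xs - Suc (Suc i)"
  have "Suc j < length xs" "Suc j = length xs - Suc i" using i by (auto simp: j_def)
  then have "adj E (xs!j) (xs!Suc j)" using assms walk_adj by blast
  then show "adj E (rev xs ! i) (rev xs ! Suc i)"
    using i \<open>Suc j = length xs - Suc i\<close> by (auto simp: rev_nth j_def intro: adj_sym)
qed

lemma walk_take: "walk V E xs \<Longrightarrow> 0 < m \<Longrightarrow> walk V E (take m xs)"
  unfolding walk_def by (auto dest: in_set_takeD)

lemma walk_drop: "walk V E xs \<Longrightarrow> j < length xs \<Longrightarrow> walk V E (drop j xs)"
  unfolding walk_def by (auto dest: in_set_dropD simp: add.commute[of j])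

lemma walk_mono: "V \<subseteq> V' \<Longrightarrow> E \<subseteq> E' \<Longrightarrow> walk V E xs \<Longrightarrow> walk V' E' xs"
  unfolding walk_def adj_def by blast

lemma walk_lip: assumes "c \<in> {1,2}" "walk V (GT_edges r) xs" "s \<le> t" "t < length xs"
  shows "\<bar>Dl r c (xs!t) - Dl r c (xs!s)\<bar> \<le> int (t - s)"
  using assms(3,4)
proof (induction t)
  case 0 then show ?case by simp
next
  case (Suc t)
  show ?case
  proof (cases "s = Suc t")
    case True then show ?thesis by simp
  next
    case False
    then have "s \<le> t" using Suc by simp
    then have ih: "\<bar>Dl r c (xs!t) - Dl r c (xs!s)\<bar> \<le> int (t - s)" using Suc by simp
    have "\<bar>Dl r c (xs!t) - Dl r c (xs!Suc t)\<bar> = 1"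
      using adj_D[OF walk_adj[OF assms(2) Suc.prems(2)] assms(1)] .
    then show ?thesis using ih \<open>s \<le> t\<close> by linarith
  qed
qed

lemma mono_walk: assumes c: "c \<in> {1,2}" and w: "walk (GT_verts r) (GT_edges r) ys"
  and h: "hd ys \<in> GT_copy r c"
  and d: "Dl r c (hd ys) - Dl r c (last ys) = int (length ys - 1)"
  shows "\<forall>t<length ys. ys!t = glue r (c, take (length (snd (hd ys)) - t) (snd (hd ys)))"
proof -
  define a where "a = snd (hd ys)"
  define n where "n = length ys - 1"
  have ne: "ys \<noteq> []" using w by (simp add: walk_def)
  have hd0: "hd ys = ys!0" using ne by (simp add: hd_conv_nth)
  have lastn: "last ys = ys!n" using ne by (simp add: last_conv_nth n_def)
  have ln: "length ys = Suc n" using ne by (simp add: n_def)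
  have Dx: "Dl r c (hd ys) = int (length a)" using Dl_copy[OF c h] a_def by simp
  have alen: "length a \<le> r" using copy_len[OF c h] a_def by simp
  have Dt: "Dl r c (ys!t) = int (length a) - int t" if "t \<le> n" for t
  proof -
    have 1: "\<bar>Dl r c (ys!t) - Dl r c (ys!0)\<bar> \<le> int t"
      using walk_lip[OF c w, of 0 t] that ln by simp
    have 2: "\<bar>Dl r c (ys!n) - Dl r c (ys!t)\<bar> \<le> int (n - t)"
      using walk_lip[OF c w, of t n] that ln by simp
    show ?thesis using 1 2 d Dx hd0 lastn that n_def by simp
  qed
  show ?thesis unfolding a_def[symmetric]
  proof (intro allI impI)
    fix t assume "t < length ys"
    then show "ys!t = glue r (c, take (length a - t) a)"
    proof (induction t)
      case 0
      have c0: "c \<noteq> 0" using c by auto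
      show ?case using copy_glue[OF c0 h] hd0 a_def by simp
    next
      case (Suc t)
      have it: "ys!t = glue r (c, take (length a - t) a)" using Suc by simp
      have inc: "ys!t \<in> GT_copy r c" unfolding it by (rule glue_in_copy) (use alen in simp)
      have "Dl r c (ys!Suc t) = Dl r c (ys!t) - 1" using Dt[of t] Dt[of "Suc t"] Suc.prems ln by simp
      then have "ys!Suc t = glue r (c, butlast (snd (ys!t)))"
        using adj_down[OF c inc walk_adj[OF w Suc.prems]] by simp
      also have "\<dots> = glue r (c, take (length a - Suc t) a)"
        unfolding it by (simp add: butlast_take)
      finally show ?case .
    qed
  qed
qed


lemma cut: assumes w: "walk V (GT_edges r) xs"
  shows "\<exists>j<length xs. snd (xs!j) = lcp (snd (hd xs)) (snd (last xs))"
proof -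
  define a where "a = snd (hd xs)"
  define b where "b = snd (last xs)"
  define p where "p = lcp a b"
  define k where "k = length p"
  have ne: "xs \<noteq> []" using w by (simp add: walk_def)
  have hd0: "hd xs = xs!0" using ne by (simp add: hd_conv_nth)
  have lastn: "last xs = xs!(length xs - 1)" using ne by (simp add: last_conv_nth)
  have pa: "take k a = p" and pb: "take k b = p" using lcp_take1 lcp_take2 p_def k_def by auto
  show ?thesis unfolding a_def[symmetric] b_def[symmetric] p_def[symmetric]
  proof (cases "k = length a \<or> k = length b")
    case True
    then show "\<exists>j<length xs. snd (xs!j) = p"
    proof
      assume "k = length a" then have "a = p" using pa by simp
      then show ?thesis using hd0 a_def ne by (intro exI[of _ 0]) auto
    next
      assume "k = length b" then have "b = p" using pb by simp
      then show ?thesis using lastn b_def ne by (intro exI[of _ "length xs - 1"]) auto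
    qed
  next
    case False
    then have ka: "k < length a" and kb: "k < length b"
      using lcp_len1 lcp_len2 k_def p_def by (auto simp: le_less)
    have neq: "a!k \<noteq> b!k" using lcp_neq ka kb k_def p_def by auto
    define q where "q = take (Suc k) a"
    have lq: "length q = Suc k" using ka q_def by simp
    have tq: "take k q = p" using pa q_def by (simp add: min_def)
    show "\<exists>j<length xs. snd (xs!j) = p"
    proof (rule ccontr)
      assume nj: "\<not> ?thesis"
      have Q: "take (Suc k) (snd (xs!t)) = q" if "t < length xs" for t
        using that
      proof (induction t)
        case 0 then show ?case using hd0 a_def q_def by simp
      next
        case (Suc t)
        have ih: "take (Suc k) (snd (xs!t)) = q" using Suc by simp
        then have lt: "Suc k \<le> length (snd (xs!t))" using lq by (metis length_take min.absorb_iff2 nat_le_linear)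
        have np: "snd (xs!Suc t) \<noteq> p" using nj Suc.prems by blast
        from adj_word[OF walk_adj[OF w Suc.prems]]
        show ?case
        proof
          assume "\<exists>bb. snd (xs ! Suc t) = snd (xs ! t) @ [bb]"
          then show ?thesis using ih lt by auto
        next
          assume "\<exists>bb. snd (xs ! t) = snd (xs ! Suc t) @ [bb]"
          then obtain bb where e: "snd (xs ! t) = snd (xs ! Suc t) @ [bb]" by blast
          show ?thesis
          proof (cases "Suc k \<le> length (snd (xs ! Suc t))")
            case True then show ?thesis using ih e by simp
          next
            case False
            then have "length (snd (xs ! Suc t)) = k" using lt e by simp
            then have "snd (xs ! t) = q" using ih e lq by simp
            then have "snd (xs ! Suc t) = take k q"
              using e \<open>length (snd (xs ! Suc t)) = k\<close> by (metis append_eq_conv_conj)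
            then show ?thesis using np tq by simp
          qed
        qed
      qed
      have "take (Suc k) b = q" using Q[of "length xs - 1"] lastn b_def ne by simp
      then have "b!k = a!k" using q_def ka kb by (metis lessI nth_take)
      then show False using neq by simp
    qed
  qed
qed

definition pw :: "bool list \<Rightarrow> bool list \<Rightarrow> nat \<Rightarrow> bool list" where
 "pw a b t = (if t \<le> length a - length (lcp a b) then take (length a - t) a
     else take (length (lcp a b) + (t - (length a - length (lcp a b)))) b)"

definition Pth :: "nat \<Rightarrow> nat \<Rightarrow> bool list \<Rightarrow> bool list \<Rightarrow> (nat \<times> bool list) list" where
 "Pth r c a b = map (\<lambda>t. glue r (c, pw a b t))
     [0..<Suc (length a + length b - 2 * length (lcp a b))]"

lemma edge_in: assumes "c \<in> {1,2}" "length w < r"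
  shows "(glue r (c,w), glue r (c, w@[bb])) \<in> induced_edges (GT_edges r) (GT_copy r c)"
proof -
  have "((c,w),(c,w@[bb])) \<in> tree_edges r c" using assms by (auto simp: tree_edges_def)
  then have "(glue r (c,w), glue r (c, w@[bb])) \<in> GT_edges r"
    using assms unfolding GT_edges_def by force
  moreover have "glue r (c,w) \<in> GT_copy r c" "glue r (c,w@[bb]) \<in> GT_copy r c"
    using assms by (auto intro!: glue_in_copy)
  ultimately show ?thesis by (simp add: induced_edges_def)
qed

lemma pw_step: assumes "t < length a + length b - 2 * length (lcp a b)"
  shows "\<exists>bb. pw a b (Suc t) = pw a b t @ [bb] \<or> pw a b t = pw a b (Suc t) @ [bb]"
proof -
  define k where "k = length (lcp a b)"
  have ka: "k \<le> length a" and kb: "k \<le> length b" using lcp_len1 lcp_len2 k_def by auto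
  have pab: "take k a = take k b" using lcp_take1 lcp_take2 k_def by metis
  consider "Suc t \<le> length a - k" | "t = length a - k" | "t > length a - k" by linarith
  then show ?thesis
  proof cases
    case 1
    then have "pw a b t = take (length a - Suc t) a @ [a ! (length a - Suc t)]"
      "pw a b (Suc t) = take (length a - Suc t) a"
      using k_def by (auto simp: pw_def take_Suc_conv_app_nth[symmetric] Suc_diff_Suc)
    then show ?thesis by auto
  next
    case 2
    then have kb': "k < length b" using assms k_def by linarith
    have "pw a b t = take k b" using 2 pab ka k_def by (simp add: pw_def)
    moreover have "pw a b (Suc t) = take (Suc k) b" using 2 k_def ka by (simp add: pw_def Suc_diff_le)
    ultimately show ?thesis using kb' by (auto simp: take_Suc_conv_app_nth)
  next
    case 3
    define m where "m = k + (t - (length a - k))"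
    have m: "m < length b" using assms 3 m_def k_def by linarith
    have "pw a b t = take m b" "pw a b (Suc t) = take (Suc m) b"
      using 3 k_def m_def by (auto simp: pw_def Suc_diff_le)
    then show ?thesis using m by (auto simp: take_Suc_conv_app_nth)
  qed
qed

lemma pw_len: assumes "t \<le> length a + length b - 2 * length (lcp a b)"
  shows "length (pw a b t) = (if t \<le> length a - length (lcp a b) then length a - t
     else length (lcp a b) + (t - (length a - length (lcp a b))))"
  using assms lcp_len1[of a b] lcp_len2[of a b] by (auto simp: pw_def)

lemma pw_le: "length (pw a b t) \<le> max (length a) (length b)"
  by (auto simp: pw_def)

lemma pw_0: "pw a b 0 = a" by (simp add: pw_def)
lemma pw_n: "pw a b (length a + length b - 2 * length (lcp a b)) = b"
proof -
  define k where "k = length (lcp a b)"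
  have ka: "k \<le> length a" and kb: "k \<le> length b" using lcp_len1 lcp_len2 k_def by auto
  have pab: "take k a = take k b" using lcp_take1 lcp_take2 k_def by metis
  show ?thesis
  proof (cases "length b = k")
    case True then show ?thesis using pab ka k_def by (simp add: pw_def)
  next
    case False
    then have "\<not> (length a + length b - 2 * k \<le> length a - k)" using kb using ka by linarith
    then show ?thesis using ka kb k_def by (simp add: pw_def)
  qed
qed

lemma pw_inj: assumes "s < t" "t \<le> length a + length b - 2 * length (lcp a b)"
  shows "pw a b s \<noteq> pw a b t"
proof
  assume e: "pw a b s = pw a b t"
  define k where "k = length (lcp a b)"
  have ka: "k \<le> length a" and kb: "k \<le> length b" using lcp_len1 lcp_len2 k_def by auto
  have ls: "length (pw a b s) = length (pw a b t)" using e by simp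
  show False
  proof (cases "t \<le> length a - k")
    case True then show ?thesis using ls pw_len[of s a b] pw_len[of t a b] assms k_def by auto
  next
    case False
    show ?thesis
    proof (cases "s \<le> length a - k")
      case False then show ?thesis using \<open>\<not> t \<le> _\<close> ls pw_len[of s a b] pw_len[of t a b] assms k_def by auto
    next
      case True
      define m where "m = k + (t - (length a - k))"
      have m: "m \<le> length b" "k < m" using assms \<open>\<not> t \<le> _\<close> m_def ka kb k_def by linarith+
      have lsm: "length a - s = m" using ls pw_len[of s a b] pw_len[of t a b] assms True \<open>\<not> t \<le> _\<close> k_def m_def by auto
      have "pw a b s = take m a" using True lsm k_def by (simp add: pw_def)
      moreover have "pw a b t = take m b" using \<open>\<not> t \<le> _\<close> k_def m_def by (simp add: pw_def)
      ultimately have "take m a = take m b" using e by simp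
      then have "take (Suc k) a = take (Suc k) b" using m by (metis Suc_leI min.absorb1 take_take)
      moreover have "k < length a" "k < length b" using m lsm by auto
      ultimately have "a!k = b!k" by (metis lessI nth_take)
      then show False using lcp_neq \<open>k < length a\<close> \<open>k < length b\<close> k_def by auto
    qed
  qed
qed


lemma P_good: assumes c: "c \<in> {1,2}" and u: "u \<in> GT_copy r c" and v: "v \<in> GT_copy r c"
  shows "gpath (GT_copy r c) (induced_edges (GT_edges r) (GT_copy r c)) (Pth r c (snd u) (snd v))
    \<and> hd (Pth r c (snd u) (snd v)) = u \<and> last (Pth r c (snd u) (snd v)) = v
    \<and> length (Pth r c (snd u) (snd v)) = Suc (length (snd u) + length (snd v) - 2 * length (lcp (snd u) (snd v)))"
proof -
  define a where "a = snd u"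
  define b where "b = snd v"
  define n where "n = length a + length b - 2 * length (lcp a b)"
  have c0: "c \<noteq> 0" using c by auto
  have la: "length a \<le> r" "length b \<le> r" using copy_len[OF c u] copy_len[OF c v] a_def b_def by auto
  have P: "Pth r c a b = map (\<lambda>t. glue r (c, pw a b t)) [0..<Suc n]" by (simp add: Pth_def n_def)
  have len: "length (Pth r c a b) = Suc n" using P by simp
  have nth: "t < Suc n \<Longrightarrow> Pth r c a b ! t = glue r (c, pw a b t)" for t
    using P by (simp del: upt_Suc)
  have pne: "Pth r c a b \<noteq> []" using len by auto
  have hd: "hd (Pth r c a b) = u" using nth[of 0] copy_glue[OF c0 u] a_def hd_conv_nth[OF pne]
    by (simp add: pw_0 del: upt_Suc)
  have last: "last (Pth r c a b) = v" using nth[of n] len copy_glue[OF c0 v] b_def n_def last_conv_nth[OF pne]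
    by (simp add: pw_n del: upt_Suc)
  have inj: "glue r (c,w) = glue r (c,w') \<Longrightarrow> w = w'" for w w'
    by (metis snd_glue snd_conv)
  have walk: "walk (GT_copy r c) (induced_edges (GT_edges r) (GT_copy r c)) (Pth r c a b)"
    unfolding walk_def
  proof (intro conjI allI impI)
    show "Pth r c a b \<noteq> []" using len by auto
    show "set (Pth r c a b) \<subseteq> GT_copy r c"
      using P la by (auto intro!: glue_in_copy order.trans[OF pw_le] simp del: upt_Suc)
    fix t assume t: "Suc t < length (Pth r c a b)"
    then have tn: "t < n" using len by simp
    obtain bb where "pw a b (Suc t) = pw a b t @ [bb] \<or> pw a b t = pw a b (Suc t) @ [bb]"
      using pw_step[OF tn[unfolded n_def]] by blast
    moreover have "length (pw a b t) \<le> r" "length (pw a b (Suc t)) \<le> r"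
      using la pw_le[of a b] by (meson max.boundedI order.trans)+
    ultimately show "adj (induced_edges (GT_edges r) (GT_copy r c)) (Pth r c a b ! t) (Pth r c a b ! Suc t)"
      using nth[of t] nth[of "Suc t"] tn edge_in[OF c, of "pw a b t" r bb] edge_in[OF c, of "pw a b (Suc t)" r bb]
      unfolding adj_def by auto
  qed
  have dist: "distinct (Pth r c a b)"
    unfolding distinct_conv_nth
  proof (intro allI impI)
    fix s t assume h: "s < length (Pth r c a b)" "t < length (Pth r c a b)" "s \<noteq> t"
    have "pw a b s \<noteq> pw a b t"
    proof (cases "s < t")
      case True then show ?thesis using pw_inj[of s t a b] h len n_def by simp
    next
      case False then show ?thesis using pw_inj[of t s a b] h len n_def by simp
    qed
    then show "Pth r c a b ! s \<noteq> Pth r c a b ! t" using nth h len inj by metis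
  qed
  show ?thesis using walk dist hd last len unfolding gpath_def a_def b_def n_def by simp
qed

lemma lower: assumes u: "u \<in> GT_verts r" and v: "v \<in> GT_verts r"
  and w: "walk (GT_verts r) (GT_edges r) xs" and hu: "hd xs = u" and lv: "last xs = v"
  shows "length (snd u) + length (snd v) - 2 * length (lcp (snd u) (snd v)) \<le> length xs - 1
    \<and> (length xs - 1 = length (snd u) + length (snd v) - 2 * length (lcp (snd u) (snd v)) \<longrightarrow>
       (\<exists>c\<in>{1,2}. u \<in> GT_copy r c \<and> v \<in> GT_copy r c \<and> xs = Pth r c (snd u) (snd v)))"
proof -
  define a where "a = snd u"
  define b where "b = snd v"
  define p where "p = lcp a b"
  define k where "k = length p"
  define n where "n = length xs - 1"
  have ne: "xs \<noteq> []" using w by (simp add: walk_def)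
  have ln: "length xs = Suc n" using ne by (simp add: n_def)
  have hd0: "xs!0 = u" using ne hu by (simp add: hd_conv_nth)
  have lastn: "xs!n = v" using ne lv by (simp add: last_conv_nth n_def)
  have ka: "k \<le> length a" and kb: "k \<le> length b" using lcp_len1 lcp_len2 k_def p_def by auto
  obtain j where j: "j < length xs" "snd (xs!j) = p"
    using cut[OF w] hu lv a_def b_def p_def by auto
  define x where "x = xs!j"
  have xV: "x \<in> GT_verts r" using walk_in[OF w j(1)] x_def by simp
  then obtain c where c: "c \<in> {1,2}" "x \<in> GT_copy r c" unfolding GT_verts_def by auto
  have Dx: "Dl r c x = int k" using Dl_copy[OF c] j(2) x_def k_def by simp
  have l1: "\<bar>Dl r c x - Dl r c u\<bar> \<le> int j"
    using walk_lip[OF c(1) w, of 0 j] j hd0 x_def by simp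
  have l2: "\<bar>Dl r c v - Dl r c x\<bar> \<le> int (n - j)"
    using walk_lip[OF c(1) w, of j n] j lastn x_def ln by simp
  have Du: "int (length a) \<le> Dl r c u" using Dl_ge[OF c(1) u] a_def by simp
  have Dv: "int (length b) \<le> Dl r c v" using Dl_ge[OF c(1) v] b_def by simp
  have jn: "j \<le> n" using j ln by simp
  have bound: "length a + length b - 2 * k \<le> n"
    using l1 l2 Du Dv Dx ka kb jn by linarith
  moreover have "\<exists>c\<in>{1,2}. u \<in> GT_copy r c \<and> v \<in> GT_copy r c \<and> xs = Pth r c a b"
    if tight: "n = length a + length b - 2 * k"
  proof -
    have Du': "Dl r c u = int (length a)" and Dv': "Dl r c v = int (length b)"
      and jj: "j = length a - k"
      using l1 l2 Du Dv Dx ka kb jn tight by linarith+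
    have uc: "u \<in> GT_copy r c" using Dl_eq_copy[OF c(1) u] Du' a_def by simp
    have vc: "v \<in> GT_copy r c" using Dl_eq_copy[OF c(1) v] Dv' b_def by simp
    define ys1 where "ys1 = take (Suc j) xs"
    have w1: "walk (GT_verts r) (GT_edges r) ys1" using walk_take[OF w] ys1_def by simp
    have l1': "length ys1 = Suc j" using j ys1_def by simp
    have h1: "hd ys1 = u" using hd0 ys1_def ne by (simp add: hd_conv_nth)
    have t1: "last ys1 = x" using j(1) ys1_def x_def by (simp add: take_Suc_conv_app_nth)
    have m1: "\<forall>t<length ys1. ys1!t = glue r (c, take (length a - t) a)"
      using mono_walk[OF c(1) w1] h1 t1 uc Du' Dx jj l1' a_def ka by simp
    define ys2 where "ys2 = rev (drop j xs)"
    have w2: "walk (GT_verts r) (GT_edges r) ys2" using walk_rev[OF walk_drop[OF w j(1)]] ys2_def by simp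
    have l2': "length ys2 = Suc (n - j)" using ys2_def ln jn by simp
    have ys2n: "ys2 ! s = xs ! (n - s)" if "s < Suc (n - j)" for s
      using that ys2_def ln jn by (simp add: rev_nth)
    have ne2: "ys2 \<noteq> []" using l2' by auto
    have h2: "hd ys2 = v" using ys2n[of 0] l2' lastn hd_conv_nth[OF ne2] by simp
    have t2: "last ys2 = x" using ys2n[of "n - j"] l2' x_def last_conv_nth[OF ne2] jn by simp
    have m2: "\<forall>t<length ys2. ys2!t = glue r (c, take (length b - t) b)"
    proof -
      have nj: "n - j = length b - k" using tight jj ka kb by linarith
      have "Dl r c (hd ys2) - Dl r c (last ys2) = int (length ys2 - 1)"
        using h2 t2 Dv' Dx l2' nj kb by simp
      then show ?thesis using mono_walk[OF c(1) w2] h2 vc b_def by simp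
    qed
    have "xs = Pth r c a b"
    proof (rule nth_equalityI)
      show "length xs = length (Pth r c a b)" using ln tight k_def p_def by (simp add: Pth_def)
      fix t assume t: "t < length xs"
      have pt: "Pth r c a b ! t = glue r (c, pw a b t)"
        using t ln tight k_def p_def by (simp add: Pth_def del: upt_Suc)
      show "xs ! t = Pth r c a b ! t"
      proof (cases "t \<le> length a - k")
        case True
        then have "xs ! t = glue r (c, take (length a - t) a)" using m1 l1' jj ys1_def by auto
        then show ?thesis using pt True k_def p_def by (simp add: pw_def)
      next
        case False
        have "xs ! t = ys2 ! (n - t)" using ys2n[of "n - t"] t ln False jj by simp
        also have "\<dots> = glue r (c, take (length b - (n - t)) b)" using m2 l2' t ln False jj by simp
        also have "length b - (n - t) = k + (t - (length a - k))" using tight False t ln ka kb by linarith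
        finally show ?thesis using pt False k_def p_def by (simp add: pw_def)
      qed
    qed
    then show ?thesis using uc vc c(1) by blast
  qed
  ultimately show ?thesis unfolding n_def a_def b_def k_def p_def by blast
qed

lemma gdist_eq: assumes "walk V E xs" "hd xs = u" "last xs = v" "length xs - 1 = n"
  and "\<And>ys. walk V E ys \<Longrightarrow> hd ys = u \<Longrightarrow> last ys = v \<Longrightarrow> n \<le> length ys - 1"
  shows "gdist V E u v = enat n"
  unfolding gdist_def
proof (rule antisym)
  show "(INF xs \<in> {xs. walk V E xs \<and> hd xs = u \<and> last xs = v}. enat (length xs - 1)) \<le> enat n"
    using assms(1-4) by (intro INF_lower2[of xs]) auto
  show "enat n \<le> (INF xs \<in> {xs. walk V E xs \<and> hd xs = u \<and> last xs = v}. enat (length xs - 1))"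
    using assms(5) by (intro INF_greatest) auto
qed


lemma induced_sub: "induced_edges E S \<subseteq> E" by (auto simp: induced_edges_def)

lemma pair_facts: assumes i: "i \<in> {1,2}" and u: "u \<in> GT_copy r i" and v: "v \<in> GT_copy r i"
  shows "gdist (GT_verts r) (GT_edges r) u v =
           enat (length (snd u) + length (snd v) - 2 * length (lcp (snd u) (snd v)))"
    and "gdist (GT_copy r i) (induced_edges (GT_edges r) (GT_copy r i)) u v =
           enat (length (snd u) + length (snd v) - 2 * length (lcp (snd u) (snd v)))"
    and "shortest_paths (GT_verts r) (GT_edges r) u v =
           (\<lambda>c. Pth r c (snd u) (snd v)) ` {c \<in> {1,2}. u \<in> GT_copy r c \<and> v \<in> GT_copy r c}"
proof -
  define n0 where "n0 = length (snd u) + length (snd v) - 2 * length (lcp (snd u) (snd v))"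
  have uV: "u \<in> GT_verts r" and vV: "v \<in> GT_verts r" using copy_verts[OF i] u v by auto
  have good: "gpath (GT_copy r c) (induced_edges (GT_edges r) (GT_copy r c)) (Pth r c (snd u) (snd v))
    \<and> hd (Pth r c (snd u) (snd v)) = u \<and> last (Pth r c (snd u) (snd v)) = v
    \<and> length (Pth r c (snd u) (snd v)) - 1 = n0" if "c \<in> {1,2}" "u \<in> GT_copy r c" "v \<in> GT_copy r c" for c
    using P_good[OF that] n0_def by simp
  have goodG: "gpath (GT_verts r) (GT_edges r) (Pth r c (snd u) (snd v))"
    if "c \<in> {1,2}" "u \<in> GT_copy r c" "v \<in> GT_copy r c" for c
    using good[OF that] walk_mono[OF copy_verts[OF that(1)] induced_sub] unfolding gpath_def by blast
  have lowG: "n0 \<le> length ys - 1" if "walk (GT_verts r) (GT_edges r) ys" "hd ys = u" "last ys = v" for ys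
    using lower[OF uV vV that] n0_def by simp
  show "gdist (GT_verts r) (GT_edges r) u v = enat n0"
    using good[OF i u v] goodG[OF i u v] lowG unfolding gpath_def by (intro gdist_eq) auto
  show "gdist (GT_copy r i) (induced_edges (GT_edges r) (GT_copy r i)) u v = enat n0"
    using good[OF i u v] lowG walk_mono[OF copy_verts[OF i] induced_sub] unfolding gpath_def
    by (intro gdist_eq) auto
  then have dG: "gdist (GT_verts r) (GT_edges r) u v = enat n0"
    using good[OF i u v] goodG[OF i u v] lowG unfolding gpath_def by (intro gdist_eq) auto
  show "shortest_paths (GT_verts r) (GT_edges r) u v =
           (\<lambda>c. Pth r c (snd u) (snd v)) ` {c \<in> {1,2}. u \<in> GT_copy r c \<and> v \<in> GT_copy r c}"
  proof
    show "shortest_paths (GT_verts r) (GT_edges r) u v \<subseteq> (\<lambda>c. Pth r c (snd u) (snd v)) ` {c \<in> {1,2}. u \<in> GT_copy r c \<and> v \<in> GT_copy r c}"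
    proof
      fix xs assume "xs \<in> shortest_paths (GT_verts r) (GT_edges r) u v"
      then have h: "walk (GT_verts r) (GT_edges r) xs" "hd xs = u" "last xs = v" "length xs - 1 = n0"
        using dG by (auto simp: shortest_paths_def gpath_def)
      then show "xs \<in> (\<lambda>c. Pth r c (snd u) (snd v)) ` {c \<in> {1,2}. u \<in> GT_copy r c \<and> v \<in> GT_copy r c}"
        using lower[OF uV vV h(1-3)] n0_def by auto
    qed
    show "(\<lambda>c. Pth r c (snd u) (snd v)) ` {c \<in> {1,2}. u \<in> GT_copy r c \<and> v \<in> GT_copy r c} \<subseteq> shortest_paths (GT_verts r) (GT_edges r) u v"
      using good goodG dG by (auto simp: shortest_paths_def)
  qed
qed

theorem mainTheorem1:
  fixes r i :: nat
  assumes "r \<ge> 2" and "i \<in> {1, 2}"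
  shows "isometric_subgraph (GT_copy r i) (induced_edges (GT_edges r) (GT_copy r i))
           (GT_verts r) (GT_edges r)
         \<and> (\<forall>u \<in> GT_copy r i. \<forall>v \<in> GT_copy r i.
              card (shortest_paths (GT_verts r) (GT_edges r) u v) =
                (if u \<noteq> v \<and> u \<in> quasi_leaves r \<and> v \<in> quasi_leaves r then 2 else 1))"
proof (intro conjI ballI)
  note i = assms(2)
  show "isometric_subgraph (GT_copy r i) (induced_edges (GT_edges r) (GT_copy r i))
           (GT_verts r) (GT_edges r)"
    unfolding isometric_subgraph_def
    using copy_verts[OF i] induced_sub[of "GT_edges r" "GT_copy r i"] pair_facts(1,2)[OF i] by simp
  fix u v assume u: "u \<in> GT_copy r i" and v: "v \<in> GT_copy r i"
  define C where "C = {c \<in> {1,2}. u \<in> GT_copy r c \<and> v \<in> GT_copy r c}"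
  define f where "f = (\<lambda>c. Pth r c (snd u) (snd v))"
  have SP: "shortest_paths (GT_verts r) (GT_edges r) u v = f ` C"
    using pair_facts(3)[OF i u v] C_def f_def by simp
  have iC: "i \<in> C" using i u v C_def by simp
  have q: "quasi_leaves r = {x. fst x = 0 \<and> length (snd x) = r}"
    unfolding quasi_leaves_def using copy_iff[of 1 _ r] copy_iff[of 2 _ r] by auto
  show "card (shortest_paths (GT_verts r) (GT_edges r) u v) =
                (if u \<noteq> v \<and> u \<in> quasi_leaves r \<and> v \<in> quasi_leaves r then 2 else 1)"
  proof (cases "u = v")
    case True
    have "f c = [u]" if "c \<in> C" for c
    proof -
      have c0: "c \<noteq> 0" using that C_def by auto
      have "u \<in> GT_copy r c" using that C_def by auto
      then show ?thesis using copy_glue[OF c0] True f_def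
        by (simp add: Pth_def lcp_self pw_0)
    qed
    then have "f ` C = {[u]}" using iC by force
    then show ?thesis using SP True by simp
  next
    case False
    show ?thesis
    proof (cases "u \<in> quasi_leaves r \<and> v \<in> quasi_leaves r")
      case True
      then have C12: "C = {1,2}" using C_def quasi_leaves_def by auto
      define a where "a = snd u"
      define b where "b = snd v"
      define k where "k = length (lcp a b)"
      have ua: "u = (0, a)" "length a = r" and vb: "v = (0,b)" "length b = r"
        using True q a_def b_def by (auto simp: prod_eq_iff)
      have kr: "k < r"
      proof (rule ccontr)
        assume "\<not> k < r"
        then have "k = r" using lcp_len1[of a b] k_def ua by simp
        then have "a = b" using lcp_take1[of a b] lcp_take2[of a b] k_def ua vb by simp
        then show False using False ua vb by simp
      qed
      have "f c ! (r - k) = (c, lcp a b)" if "c \<in> {1,2}" for c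
      proof -
        have "r - k < length (f c)" using ua vb kr f_def a_def b_def k_def by (simp add: Pth_def)
        then have "f c ! (r - k) = glue r (c, pw a b (r - k))" using f_def a_def b_def
          by (simp add: Pth_def del: upt_Suc)
        also have "pw a b (r - k) = lcp a b" using ua k_def lcp_take1[of a b] lcp_len1[of a b] by (simp add: pw_def)
        also have "glue r (c, lcp a b) = (c, lcp a b)" using kr k_def by (simp add: glue_lt)
        finally show ?thesis .
      qed
      then have e1: "f 1 ! (r - k) = (1, lcp a b)" and e2: "f 2 ! (r - k) = (2, lcp a b)" by auto
      then have "f 1 \<noteq> f 2" by auto
      then have "card (f ` C) = 2" using C12 by simp
      then show ?thesis using SP True False by simp
    next
      case nq: False
      have "C = {i}"
      proof -
        have "c = i" if "c \<in> C" for c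
        proof (rule ccontr)
          assume "c \<noteq> i"
          have cu: "u \<in> GT_copy r c" "v \<in> GT_copy r c" "c \<in> {1,2}" using that C_def by auto
          have "u \<in> GT_copy r 1 \<inter> GT_copy r 2 \<and> v \<in> GT_copy r 1 \<inter> GT_copy r 2"
          proof (cases "c = 1")
            case True then have "i = 2" using i \<open>c \<noteq> i\<close> by auto
            then show ?thesis using cu u v True by auto
          next
            case False then have "c = 2" "i = 1" using cu i \<open>c \<noteq> i\<close> by auto
            then show ?thesis using cu u v by auto
          qed
          then have "u \<in> quasi_leaves r" "v \<in> quasi_leaves r"
            unfolding quasi_leaves_def by auto
          then show False using nq by simp
        qed
        then show ?thesis using iC by blast
      qed
      then show ?thesis using SP nq by simp
    qed
  qed
qed

end
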